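(* Let $E\subseteq\mathbb{R}$, and let $\mathbf{AC}(E)$ be the set of Abel continuous functions on $E$, regarded as a subset of the space of all continuous real functions on $E$ equipped with the topology of uniform convergence on $E$. Then $\mathbf{AC}(E)$ is closed: if $f$ is a continuous function on $E$ and there is a sequence $(f_n)$ in $\mathbf{AC}(E)$ converging uniformly on $E$ to $f$, then $f\in\mathbf{AC}(E)$.
   Context: A sequence $(p_n)_{n\ge0}$ is Abel convergent to $\ell$ if $\sum_{k=0}^{\infty}p_k x^k$ converges for every $0\le x<1$ and $\lim_{x\to 1^-}(1-x)\sum_{k=0}^{\infty}p_k x^k=\ell$. A function $g:E\to\mathbb{R}$ is Abel continuous on $E$ if for every sequence $(p_n)$ in $E$ Abel convergent to some $\ell\in E$, $(g(p_n))$ is Abel convergent to $g(\ell)$. *)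

theory Defs
  imports "HOL-Analysis.Analysis"
begin

definition abel_convergent :: "(nat \<Rightarrow> real) \<Rightarrow> real \<Rightarrow> bool" where
  "abel_convergent p l \<longleftrightarrow>
     (\<forall>x. 0 \<le> x \<and> x < 1 \<longrightarrow> summable (\<lambda>k. p k * x ^ k)) \<and>
     ((\<lambda>x. (1 - x) * (\<Sum>k. p k * x ^ k)) \<longlongrightarrow> l) (at_left 1)"

definition abel_continuous_on :: "real set \<Rightarrow> (real \<Rightarrow> real) \<Rightarrow> bool" where
  "abel_continuous_on E g \<longleftrightarrow>
     (\<forall>p l. (\<forall>n. p n \<in> E) \<longrightarrow> l \<in> E \<longrightarrow> abel_convergent p l \<longrightarrow>
        abel_convergent (\<lambda>n. g (p n)) (g l))"

end

theory Submission
  imports Defs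
begin

lemma bounded_abel:
  fixes d :: "nat \<Rightarrow> real"
  assumes "\<And>k. \<bar>d k\<bar> \<le> e" "0 \<le> x" "x < 1"
  shows "summable (\<lambda>k. d k * x ^ k)" "\<bar>(1 - x) * (\<Sum>k. d k * x ^ k)\<bar> \<le> e"
proof -
  have g: "summable (\<lambda>k. x ^ k)" using assms by (intro summable_geometric) auto
  hence ge: "summable (\<lambda>k. e * x ^ k)" by (rule summable_mult)
  have b: "norm (d k * x ^ k) \<le> e * x ^ k" for k
    using assms(1)[of k] assms(2) by (simp add: abs_mult mult_right_mono)
  show s: "summable (\<lambda>k. d k * x ^ k)"
    by (rule summable_comparison_test[OF _ ge]) (use b in auto)
  have sa: "summable (\<lambda>k. \<bar>d k * x ^ k\<bar>)"
    by (rule summable_comparison_test[OF _ ge]) (use b in auto)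
  have "\<bar>\<Sum>k. d k * x ^ k\<bar> \<le> (\<Sum>k. \<bar>d k * x ^ k\<bar>)"
    using summable_rabs[OF sa] .
  also have "\<dots> \<le> (\<Sum>k. e * x ^ k)"
    by (rule suminf_le) (use b sa ge in auto)
  also have "\<dots> = e * (1 / (1 - x))"
    using suminf_mult[OF g, of e] suminf_geometric[of x] assms by simp
  finally have "\<bar>\<Sum>k. d k * x ^ k\<bar> \<le> e / (1 - x)" by simp
  hence "(1 - x) * \<bar>\<Sum>k. d k * x ^ k\<bar> \<le> e"
    using assms by (simp add: field_simps)
  thus "\<bar>(1 - x) * (\<Sum>k. d k * x ^ k)\<bar> \<le> e" using assms by (simp add: abs_mult)
qed

theorem theorem9:
  fixes E :: "real set" and f :: "real \<Rightarrow> real" and fs :: "nat \<Rightarrow> real \<Rightarrow> real"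
  assumes "continuous_on E f"
    and "\<And>n. continuous_on E (fs n)"
    and "\<And>n. abel_continuous_on E (fs n)"
    and "uniform_limit E fs f sequentially"
  shows "abel_continuous_on E f"
  unfolding abel_continuous_on_def
proof (intro allI impI)
  fix p l assume pE: "\<forall>n. p n \<in> E" and lE: "l \<in> E" and ac: "abel_convergent p l"
  have U: "\<And>e. e > 0 \<Longrightarrow> \<exists>N. \<forall>y\<in>E. \<bar>fs N y - f y\<bar> < e"
  proof -
    fix e :: real assume "e > 0"
    with assms(4) have "\<forall>\<^sub>F n in sequentially. \<forall>y\<in>E. dist (fs n y) (f y) < e"
      unfolding uniform_limit_iff by blast
    then obtain N where "\<forall>y\<in>E. dist (fs N y) (f y) < e"
      by (auto simp: eventually_sequentially)
    thus "\<exists>N. \<forall>y\<in>E. \<bar>fs N y - f y\<bar> < e" by (auto simp: dist_real_def)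
  qed
  have acN: "abel_convergent (\<lambda>n. fs N (p n)) (fs N l)" for N
    using assms(3)[of N] pE lE ac unfolding abel_continuous_on_def by blast
  have split: "f (p k) * x ^ k = fs N (p k) * x ^ k + (f (p k) - fs N (p k)) * x ^ k" for N k x
    by (simp add: algebra_simps)
  have summ: "summable (\<lambda>k. f (p k) * x ^ k)" if "0 \<le> x" "x < 1" for x
  proof -
    obtain N where N: "\<forall>y\<in>E. \<bar>fs N y - f y\<bar> < 1" using U[of 1] by auto
    have a: "summable (\<lambda>k. fs N (p k) * x ^ k)" using acN[of N] that unfolding abel_convergent_def by blast
    have b: "summable (\<lambda>k. (f (p k) - fs N (p k)) * x ^ k)"
      by (rule bounded_abel(1)[of _ 1]) (use N pE that in \<open>auto simp: abs_minus_commute less_imp_le\<close>)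
    show ?thesis using summable_add[OF a b] by (simp add: algebra_simps)
  qed
  show "abel_convergent (\<lambda>n. f (p n)) (f l)"
    unfolding abel_convergent_def
  proof (intro conjI allI impI)
    fix x :: real assume "0 \<le> x \<and> x < 1" thus "summable (\<lambda>k. f (p k) * x ^ k)" using summ by auto
  next
    show "((\<lambda>x. (1 - x) * (\<Sum>k. f (p k) * x ^ k)) \<longlongrightarrow> f l) (at_left 1)"
      unfolding tendsto_iff
    proof (intro allI impI)
      fix e :: real assume e: "e > 0"
      obtain N where N: "\<forall>y\<in>E. \<bar>fs N y - f y\<bar> < e/3" using U[of "e/3"] e by auto
      have "((\<lambda>x. (1 - x) * (\<Sum>k. fs N (p k) * x ^ k)) \<longlongrightarrow> fs N l) (at_left 1)"
        using acN[of N] unfolding abel_convergent_def by blast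
      hence ev1: "\<forall>\<^sub>F x in at_left 1. dist ((1 - x) * (\<Sum>k. fs N (p k) * x ^ k)) (fs N l) < e/3"
        unfolding tendsto_iff using e by (meson divide_pos_pos zero_less_numeral)
      have ev2: "\<forall>\<^sub>F x in at_left (1::real). x \<in> {0<..<1}"
        by (rule eventually_at_left_real) simp
      show "\<forall>\<^sub>F x in at_left 1. dist ((1 - x) * (\<Sum>k. f (p k) * x ^ k)) (f l) < e"
        using ev1 ev2
      proof eventually_elim
        case (elim x)
        hence x: "0 \<le> x" "x < 1" by auto
        have a: "summable (\<lambda>k. fs N (p k) * x ^ k)" using acN[of N] x unfolding abel_convergent_def by blast
        have db: "\<bar>f (p k) - fs N (p k)\<bar> \<le> e/3" for k
          using N pE by (metis abs_minus_commute less_imp_le)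
        have bs: "summable (\<lambda>k. (f (p k) - fs N (p k)) * x ^ k)"
          and bb: "\<bar>(1 - x) * (\<Sum>k. (f (p k) - fs N (p k)) * x ^ k)\<bar> \<le> e/3"
          using bounded_abel[of "\<lambda>k. f (p k) - fs N (p k)" "e/3" x, OF db x] by auto
        have "(\<Sum>k. f (p k) * x ^ k) = (\<Sum>k. fs N (p k) * x ^ k) + (\<Sum>k. (f (p k) - fs N (p k)) * x ^ k)"
          using suminf_add[OF a bs] split by simp
        hence eq: "(1 - x) * (\<Sum>k. f (p k) * x ^ k) = (1 - x) * (\<Sum>k. fs N (p k) * x ^ k) + (1 - x) * (\<Sum>k. (f (p k) - fs N (p k)) * x ^ k)"
          by (simp add: algebra_simps)
        have c: "\<bar>fs N l - f l\<bar> < e/3" using N lE by auto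
        show ?case using elim(1) bb c unfolding eq dist_real_def by linarith
      qed
    qed
  qed
qed

end
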